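(* Let $T$ be a lush hedge of height $H$. Then for every integer $i\ge 2$, $$\ell_i(T)\ \ge\ 2\sum_{j=i+1}^{H+1}\ell_j(T).$$
   Context: A rooted tree is a finite tree with a distinguished vertex, the root. If $y,z$ are adjacent and the path from the root to $y$ passes through $z$, then $y$ is a child of $z$. In a rooted tree with at least two vertices a leaf is a non-root vertex of degree $1$; in the one-vertex tree $P_1$ the single vertex is both root and leaf. A hedge is a rooted tree which is either $P_1$ or in which all leaves have the same distance to the root. The height $\mathrm{h}(u)$ of a vertex $u$ of a hedge is its distance to a nearest leaf, and the height $H$ of the hedge is the height of its root. $V_i(T)$ denotes the set of vertices of height $i$, and for $i\ge1$, $\ell_i(T):=|V_{i-1}(T)|-|V_i(T)|$ (so $\ell_{H+1}(T)=1$ and $\ell_i(T)=0$ for $i>H+1$). A hedge is lush if every vertex of height at least $2$ has at least three children and every vertex of height $1$ has at least two children. *)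

theory Defs
  imports Main
begin

text \<open>Finite rooted trees, as rose trees (the root is the outer node; its children are
  the list entries). Vertices are addressed by positions: lists of child indices from the root.\<close>

datatype rtree = Node "rtree list"

fun children :: "rtree \<Rightarrow> rtree list" where
  "children (Node cs) = cs"

fun valid_pos :: "rtree \<Rightarrow> nat list \<Rightarrow> bool" where
  "valid_pos t [] = True"
| "valid_pos (Node cs) (i # p) = (i < length cs \<and> valid_pos (cs ! i) p)"

definition positions :: "rtree \<Rightarrow> nat list set" where
  "positions t = {p. valid_pos t p}"

fun subtree :: "rtree \<Rightarrow> nat list \<Rightarrow> rtree" where
  "subtree t [] = t"
| "subtree (Node cs) (i # p) = (if i < length cs then subtree (cs ! i) p else Node [])"

text \<open>A vertex is a leaf iff it has no children: for the one-vertex tree this is the root;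
  otherwise the root has a child, and a non-root vertex has degree 1 iff it has no children.\<close>
definition is_leaf :: "rtree \<Rightarrow> nat list \<Rightarrow> bool" where
  "is_leaf t p \<longleftrightarrow> p \<in> positions t \<and> children (subtree t p) = []"

fun lcp_len :: "nat list \<Rightarrow> nat list \<Rightarrow> nat" where
  "lcp_len (a # p) (b # q) = (if a = b then Suc (lcp_len p q) else 0)"
| "lcp_len _ _ = 0"

definition tdist :: "nat list \<Rightarrow> nat list \<Rightarrow> nat" where
  "tdist p q = length p + length q - 2 * lcp_len p q"

definition hedge :: "rtree \<Rightarrow> bool" where
  "hedge t \<longleftrightarrow> (\<forall>p q. is_leaf t p \<longrightarrow> is_leaf t q \<longrightarrow> length p = length q)"

definition vheight :: "rtree \<Rightarrow> nat list \<Rightarrow> nat" where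
  "vheight t p = Min {tdist p q | q. is_leaf t q}"

definition height :: "rtree \<Rightarrow> nat" where
  "height t = vheight t []"

definition Vset :: "rtree \<Rightarrow> nat \<Rightarrow> nat list set" where
  "Vset t i = {p \<in> positions t. vheight t p = i}"

text \<open>\<open>ell t i = |V_{i-1}(T)| - |V_i(T)|\<close>, meaningful for \<open>i \<ge> 1\<close>.\<close>
definition ell :: "rtree \<Rightarrow> nat \<Rightarrow> int" where
  "ell t i = int (card (Vset t (i - 1))) - int (card (Vset t i))"

definition lush :: "rtree \<Rightarrow> bool" where
  "lush t \<longleftrightarrow> (\<forall>p \<in> positions t.
      (vheight t p \<ge> 2 \<longrightarrow> length (children (subtree t p)) \<ge> 3) \<and>
      (vheight t p = 1 \<longrightarrow> length (children (subtree t p)) \<ge> 2))"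

end

theory Submission
  imports Defs
begin

lemma positions_Node:
  "positions (Node cs) = insert [] (\<Union>i<length cs. (#) i ` positions (cs!i))"
  unfolding positions_def
  apply (rule set_eqI)
  subgoal for p by (cases p) auto
  done

lemma finite_positions: "finite (positions t)"
proof (induction t)
  case (Node cs)
  show ?case unfolding positions_Node using Node by auto
qed

lemma valid_append:
  "valid_pos t (p @ q) \<longleftrightarrow> valid_pos t p \<and> valid_pos (subtree t p) q"
proof (induction p arbitrary: t)
  case Nil then show ?case by simp
next
  case (Cons a p)
  obtain cs where t: "t = Node cs" by (cases t)
  show ?case using Cons by (auto simp: t)
qed

lemma subtree_append:
  "valid_pos t p \<Longrightarrow> subtree t (p @ q) = subtree (subtree t p) q"
proof (induction p arbitrary: t)
  case Nil then show ?case by simp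
next
  case (Cons a p)
  obtain cs where t: "t = Node cs" by (cases t)
  show ?case using Cons by (auto simp: t)
qed

lemma valid_snoc:
  "valid_pos t (p @ [j]) \<longleftrightarrow> valid_pos t p \<and> j < length (children (subtree t p))"
  unfolding valid_append by (cases "subtree t p") auto

lemma exists_leaf: "\<exists>q. valid_pos t q \<and> children (subtree t q) = []"
proof (induction t)
  case (Node cs)
  show ?case
  proof (cases cs)
    case Nil then show ?thesis by (intro exI[of _ "[]"]) auto
  next
    case (Cons c cs')
    then obtain q where "valid_pos c q \<and> children (subtree c q) = []" using Node by auto
    then show ?thesis using Cons by (intro exI[of _ "0 # q"]) auto
  qed
qed

lemma leaf_ext: "valid_pos t p \<Longrightarrow> \<exists>q. is_leaf t (p @ q)"
proof -
  assume v: "valid_pos t p"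
  obtain q where "valid_pos (subtree t p) q \<and> children (subtree (subtree t p) q) = []"
    using exists_leaf by blast
  then show ?thesis using v
    by (intro exI[of _ q]) (auto simp: is_leaf_def positions_def valid_append subtree_append)
qed

lemma lcp_le1: "lcp_len p q \<le> length p"
  by (induction p q rule: lcp_len.induct) auto

lemma lcp_le2: "lcp_len p q \<le> length q"
  by (induction p q rule: lcp_len.induct) auto

lemma lcp_app: "lcp_len p (p @ r) = length p"
  by (induction p) auto

locale hd_ctx =
  fixes t :: rtree and D :: nat
  assumes hedge: "hedge t"
    and leafD: "\<And>q. is_leaf t q \<Longrightarrow> length q = D"
begin

lemma len_le: "valid_pos t p \<Longrightarrow> length p \<le> D"
  using leaf_ext[of t p] leafD by fastforce

lemma vheight_eq:
  assumes v: "valid_pos t p"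
  shows "vheight t p = D - length p"
proof -
  let ?S = "{tdist p q | q. is_leaf t q}"
  have fin: "finite ?S"
  proof -
    have "?S \<subseteq> tdist p ` positions t" by (auto simp: is_leaf_def)
    then show ?thesis using finite_positions finite_subset by blast
  qed
  obtain r where r: "is_leaf t (p @ r)" using leaf_ext v by blast
  have inS: "D - length p \<in> ?S"
  proof -
    have "tdist p (p @ r) = D - length p"
      using leafD[OF r] by (simp add: tdist_def lcp_app)
    then show ?thesis using r by (intro CollectI exI[of _ "p @ r"]) simp
  qed
  have lb: "\<forall>x\<in>?S. D - length p \<le> x"
  proof
    fix x assume "x \<in> ?S"
    then obtain q where q: "is_leaf t q" "x = tdist p q" by blast
    have "length q = D" using leafD q(1) by simp
    then show "D - length p \<le> x"
      using lcp_le1[of p q] lcp_le2[of p q] q(2) by (simp add: tdist_def)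
  qed
  have "Min ?S = D - length p"
    using fin inS lb by (meson Min_eqI)
  then show ?thesis by (simp add: vheight_def)
qed

definition Lv :: "nat \<Rightarrow> nat list set" where
  "Lv m = {p. valid_pos t p \<and> length p = m}"

lemma Vset_eq: "k \<le> D \<Longrightarrow> Vset t k = Lv (D - k)"
  unfolding Vset_def Lv_def positions_def
  using vheight_eq len_le by auto

lemma Vset_empty: "k > D \<Longrightarrow> Vset t k = {}"
  unfolding Vset_def positions_def
  using vheight_eq len_le by auto

end

lemma finite_Lv: "finite {p. valid_pos t p \<and> length p = m}"
  using finite_positions[of t] unfolding positions_def
  by (rule rev_finite_subset) auto

lemma card_Lv_Suc:
  "card {p. valid_pos t p \<and> length p = Suc m} =
   (\<Sum>p\<in>{p. valid_pos t p \<and> length p = m}. length (children (subtree t p)))"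
proof -
  let ?L = "{p. valid_pos t p \<and> length p = m}"
  have eq: "{p. valid_pos t p \<and> length p = Suc m} =
     (\<Union>p\<in>?L. (\<lambda>j. p @ [j]) ` {..<length (children (subtree t p))})"
  proof (rule set_eqI, rule iffI)
    fix q assume q: "q \<in> {p. valid_pos t p \<and> length p = Suc m}"
    then have "q \<noteq> []" by auto
    then have qq: "q = butlast q @ [last q]" by simp
    then show "q \<in> (\<Union>p\<in>?L. (\<lambda>j. p @ [j]) ` {..<length (children (subtree t p))})"
      using q valid_snoc[of t "butlast q" "last q"] by (auto intro!: bexI[of _ "butlast q"])
  next
    fix q assume "q \<in> (\<Union>p\<in>?L. (\<lambda>j. p @ [j]) ` {..<length (children (subtree t p))})"
    then show "q \<in> {p. valid_pos t p \<and> length p = Suc m}"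
      using valid_snoc by auto
  qed
  have "card (\<Union>p\<in>?L. (\<lambda>j. p @ [j]) ` {..<length (children (subtree t p))})
      = (\<Sum>p\<in>?L. card ((\<lambda>j. p @ [j]) ` {..<length (children (subtree t p))}))"
    by (rule card_UN_disjoint) (auto simp: finite_Lv)
  also have "\<dots> = (\<Sum>p\<in>?L. length (children (subtree t p)))"
    by (rule sum.cong) (auto simp: card_image inj_on_def)
  finally show ?thesis using eq by simp
qed

lemma telescope:
  fixes f :: "nat \<Rightarrow> int"
  shows "i \<le> Suc H \<Longrightarrow> (\<Sum>j = i + 1..H + 1. f (j - 1) - f j) = f i - f (H + 1)"
proof (induction H)
  case 0
  then show ?case by (cases i) auto
next
  case (Suc H)
  show ?case
  proof (cases "i = Suc (Suc H)")
    case True then show ?thesis by simp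
  next
    case False
    then have "i \<le> Suc H" using Suc.prems by simp
    then have "(\<Sum>j = i + 1..Suc H + 1. f (j - 1) - f j)
       = (\<Sum>j = i + 1..H + 1. f (j - 1) - f j) + (f (Suc H) - f (Suc H + 1))"
      by (simp add: sum.cl_ivl_Suc)
    then show ?thesis using Suc.IH \<open>i \<le> Suc H\<close> by simp
  qed
qed

theorem mainTheorem1:
  fixes T :: rtree and H i :: nat
  assumes "hedge T" and "lush T" and "H = height T" and "2 \<le> i"
  shows "ell T i \<ge> 2 * (\<Sum>j = i + 1..H + 1. ell T j)"
proof -
  obtain q0 where q0: "is_leaf T q0"
    using leaf_ext[of T "[]"] by auto
  define D where "D = length q0"
  interpret hd_ctx T D
  proof
    show "hedge T" by (rule assms(1))
    fix q assume "is_leaf T q"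
    then show "length q = D" using assms(1) q0 unfolding hedge_def D_def by blast
  qed
  have HD: "H = D" using assms(3) vheight_eq[of "[]"] by (simp add: height_def)
  define n where "n k = int (card (Vset T k))" for k
  have ellE: "ell T j = n (j - 1) - n j" for j by (simp add: ell_def n_def)
  have nz: "n k = 0" if "k > D" for k using Vset_empty[OF that] by (simp add: n_def)
  have sumE: "(\<Sum>j = i + 1..H + 1. ell T j) = n i"
  proof (cases "i \<le> Suc H")
    case True
    then show ?thesis unfolding ellE using telescope[OF True, of n] nz HD by simp
  next
    case False
    then show ?thesis using nz HD by simp
  qed
  have key: "n (i - 1) \<ge> 3 * n i"
  proof (cases "i \<le> D")
    case False
    then show ?thesis using nz by (simp add: n_def)
  next
    case True
    have e1: "Vset T (i - 1) = Lv (Suc (D - i))" using Vset_eq[of "i - 1"] True assms(4)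
      by (simp add: Suc_diff_le)
    have e2: "Vset T i = Lv (D - i)" using Vset_eq True by simp
    have ch: "\<forall>p\<in>Lv (D - i). 3 \<le> length (children (subtree T p))"
    proof
      fix p assume p: "p \<in> Lv (D - i)"
      then have "vheight T p = i" using vheight_eq True by (auto simp: Lv_def)
      then show "3 \<le> length (children (subtree T p))"
        using assms(2) assms(4) p by (auto simp: lush_def Lv_def positions_def)
    qed
    have "card (Lv (Suc (D - i))) = (\<Sum>p\<in>Lv (D - i). length (children (subtree T p)))"
      unfolding Lv_def by (rule card_Lv_Suc)
    also have "\<dots> \<ge> (\<Sum>p\<in>Lv (D - i). 3)" using ch by (intro sum_mono) auto
    finally have "card (Lv (Suc (D - i))) \<ge> 3 * card (Lv (D - i))" by simp
    then show ?thesis unfolding n_def e1 e2 by linarith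
  qed
  show ?thesis using key sumE ellE[of i] by linarith
qed

end
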